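(* Let $(V,\mu)$ be a connected, locally finite weighted graph satisfying condition $(p_0)$, let $m>1$, and let $p,q\in\mathbb R$ with $p+q\ne m-1$. Let $p_1>1$ and let $\Omega\subset V$ be nonempty. Let $u:V\to(0,\infty)$ be non-constant and satisfy $$\Delta_m u(x)+u(x)^p|\nabla u(x)|^q\le0\quad\text{for all }x\in\Omega,$$ and $\frac{1}{p_1}\le\frac{u(x)}{u(y)}\le p_1$ for all $x\sim y$. If $\Omega\ne V$, assume moreover that $u(y)\ge u(x)$ whenever $x\in\Omega$, $y\in V\setminus\Omega$, $x\sim y$. Let $s,t>0$ satisfy $$\frac{mp+q+t(q-m)}{(m-1)p+t(q-m+1)}>1,\qquad \frac{p+q-t}{m-1-t}>1,\qquad s>\frac{mp+q+t(q-m)}{p+q-m+1},$$ and set $\theta=\frac{mp+q+t(q-m)}{p+q-m+1}$. Then there is a constant $C>0$ depending only on $p_0,p_1,m,p,q,s,t$ such that for every function $\varphi:V\to[0,1]$ with finite support contained in $\Omega$, $$\sum_{x\in\Omega}\mu(x)u(x)^{p-t}|\nabla u(x)|^q\varphi(x)^s\le C\Big(\sum_{\substack{x,y\in\Omega\\ \nabla_{xy}\varphi\ne0}}\mu_{xy}\varphi(x)^s u(x)^{p-t}|\nabla u(x)|^q\Big)^{\frac{m-1-t}{p+q-t}}\Big(\sum_{\substack{x,y\in\Omega\\ \nabla_{xy}\varphi\ne0}}\mu_{xy}|\nabla_{xy}\varphi|^{\theta}\Big)^{\frac{p+q-m+1}{p+q-t}},$$ and consequently $$\sum_{x\in\Omega}\mu(x)u(x)^{p-t}|\nabla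 u(x)|^q\varphi(x)^s\le C'\sum_{\substack{x,y\in\Omega\\ \nabla_{xy}\varphi\ne0}}\mu_{xy}|\nabla_{xy}\varphi|^{\theta},$$ for a constant $C'>0$ depending only on $p_0,p_1,m,p,q,s,t$.
   Context: $G=(V,E)$ is a connected, locally finite graph with no loops and no multiple edges; $x\sim y$ means adjacency. A weight is a symmetric function $\mu:V\times V\to[0,\infty)$ with $\mu_{xy}>0$ iff $x\sim y$; $\mu(x)=\sum_{y\sim x}\mu_{xy}$. $\Delta_m u(x)=\frac{1}{\mu(x)}\sum_{y\sim x}\mu_{xy}|u(y)-u(x)|^{m-2}(u(y)-u(x))$, $|\nabla u(x)|=\big(\sum_{y\sim x}\frac{\mu_{xy}}{2\mu(x)}(u(y)-u(x))^2\big)^{1/2}$, and $\nabla_{xy}f=f(y)-f(x)$. Condition $(p_0)$: there is $p_0>1$ with $\mu_{xy}/\mu(x)\ge1/p_0$ for all $x\sim y$. Conventions: $0^0=1$, $0^q=0$ for $q>0$, and for $q<0$, $|\nabla u(x)|^q=+\infty$ when $|\nabla u(x)|=0$ (so the hypothesized inequality forces $|\nabla u|>0$ on $\Omega$ in that case). *)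

theory Defs
  imports Complex_Main
begin

text \<open>A weighted graph on a vertex set V of natural numbers (every connected locally
finite graph is countable, so this loses no generality). Adjacency x ~ y means mu x y > 0.\<close>

definition adj :: "(nat \<Rightarrow> nat \<Rightarrow> real) \<Rightarrow> nat \<Rightarrow> nat \<Rightarrow> bool" where
  "adj \<mu> x y \<longleftrightarrow> 0 < \<mu> x y"

definition weighted_graph :: "nat set \<Rightarrow> (nat \<Rightarrow> nat \<Rightarrow> real) \<Rightarrow> bool" where
  "weighted_graph V \<mu> \<longleftrightarrow>
     (\<forall>x y. \<mu> x y = \<mu> y x) \<and> (\<forall>x y. 0 \<le> \<mu> x y) \<and>
     (\<forall>x y. adj \<mu> x y \<longrightarrow> x \<in> V \<and> y \<in> V \<and> x \<noteq> y) \<and>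
     (\<forall>x\<in>V. finite {y. adj \<mu> x y}) \<and>
     (\<forall>x\<in>V. \<forall>y\<in>V. (adj \<mu>)\<^sup>*\<^sup>* x y)"

definition wdeg :: "(nat \<Rightarrow> nat \<Rightarrow> real) \<Rightarrow> nat \<Rightarrow> real" where
  "wdeg \<mu> x = (\<Sum>y\<in>{y. adj \<mu> x y}. \<mu> x y)"

definition cond_p0 :: "(nat \<Rightarrow> nat \<Rightarrow> real) \<Rightarrow> real \<Rightarrow> bool" where
  "cond_p0 \<mu> p0 \<longleftrightarrow> p0 > 1 \<and> (\<forall>x y. adj \<mu> x y \<longrightarrow> \<mu> x y / wdeg \<mu> x \<ge> 1 / p0)"

text \<open>m-Laplacian; the term |d|^(m-2) d is 0 when d = 0 (0 powr _ = 0).\<close>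
definition mlap :: "real \<Rightarrow> (nat \<Rightarrow> nat \<Rightarrow> real) \<Rightarrow> (nat \<Rightarrow> real) \<Rightarrow> nat \<Rightarrow> real" where
  "mlap m \<mu> u x = (1 / wdeg \<mu> x) *
     (\<Sum>y\<in>{y. adj \<mu> x y}. \<mu> x y * (\<bar>u y - u x\<bar> powr (m - 2) * (u y - u x)))"

definition gradn :: "(nat \<Rightarrow> nat \<Rightarrow> real) \<Rightarrow> (nat \<Rightarrow> real) \<Rightarrow> nat \<Rightarrow> real" where
  "gradn \<mu> u x = sqrt (\<Sum>y\<in>{y. adj \<mu> x y}. \<mu> x y / (2 * wdeg \<mu> x) * (u y - u x)\<^sup>2)"

text \<open>Power with conventions 0^0 = 1, 0^a = 0 for a > 0 (for a < 0 the base is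
  forced positive by the hypotheses).\<close>
definition cpow :: "real \<Rightarrow> real \<Rightarrow> real" where
  "cpow x a = (if x = 0 then (if a = 0 then 1 else 0) else x powr a)"

end

theory Submission
  imports Defs "HOL-Analysis.Analysis"
begin

lemma amgm3:
  fixes a b c l1 l2 l3 :: real
  assumes "a \<ge> 0" "b \<ge> 0" "c \<ge> 0" "a+b+c = 1"
  shows "exp (a*l1+b*l2+c*l3) \<le> a*exp l1 + b*exp l2 + c*exp l3"
proof (cases "b + c = 0")
  case True
  then have "b = 0" "c = 0" "a = 1" using assms by auto
  then show ?thesis by simp
next
  case False
  define r where "r = b + c"
  have r: "r > 0" "r \<le> 1" using False assms r_def by auto
  define z where "z = (b/r)*l2 + (c/r)*l3"
  have "exp z \<le> (b/r) * exp l2 + (c/r) * exp l3"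
  proof -
    have "exp ((1 - c/r) *\<^sub>R l2 + (c/r) *\<^sub>R l3) \<le> (1 - c/r) * exp l2 + (c/r) * exp l3"
      using convex_onD[OF exp_convex, of "c/r" l2 l3] r assms r_def by auto
    moreover have "1 - c/r = b/r" using r r_def by (simp add: field_simps)
    ultimately show ?thesis unfolding z_def by simp
  qed
  moreover have "exp ((1 - r) *\<^sub>R l1 + r *\<^sub>R z) \<le> (1 - r) * exp l1 + r * exp z"
    using convex_onD[OF exp_convex, of r l1 z] r by auto
  moreover have "1 - r = a" using assms r_def by simp
  moreover have "r * z = b*l2 + c*l3" using r unfolding z_def by (simp add: field_simps)
  moreover have "(1 - r) *\<^sub>R l1 + r *\<^sub>R z = a*l1+b*l2+c*l3"
    using calculation by simp
  ultimately have "exp (a*l1+b*l2+c*l3) \<le> a * exp l1 + r * ((b/r) * exp l2 + (c/r) * exp l3)"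
    by (smt (verit, best) mult_left_mono r(1))
  also have "\<dots> = a*exp l1 + b*exp l2 + c*exp l3" using r by (simp add: field_simps)
  finally show ?thesis .
qed

lemma phi_pow:
  fixes x y s :: real
  assumes "0 \<le> y" "y < x" "x \<le> 1" "s > 0"
  shows "x powr s - y powr s \<le> real (nat \<lceil>s\<rceil>) * x powr (s-1) * (x - y)"
proof -
  define n where "n = nat \<lceil>s\<rceil>"
  define r where "r = y / x"
  have x0: "x > 0" using assms by simp
  have r0: "0 \<le> r" "r < 1" using assms x0 unfolding r_def by (auto simp: field_simps)
  have sn: "s \<le> real n" unfolding n_def by linarith
  have "r ^ n \<le> r powr s"
  proof (cases "r = 0")
    case True
    have "n > 0" unfolding n_def using assms by simp
    then show ?thesis using True by (simp add: power_0_left)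
  next
    case False
    then have "r powr real n \<le> r powr s" using powr_mono'[OF sn, of r] r0 by simp
    then show ?thesis using False r0 by (simp add: powr_realpow)
  qed
  moreover have "1 + real n * (r - 1) \<le> r ^ n"
    using Bernoulli_inequality[of "r - 1" n] r0 by simp
  ultimately have 1: "1 - r powr s \<le> real n * (1 - r)" by (simp add: algebra_simps)
  have yx: "y = x * r" using x0 unfolding r_def by simp
  have "y powr s = x powr s * r powr s" using yx r0 x0 by (simp add: powr_mult)
  then have "x powr s - y powr s = x powr s * (1 - r powr s)" by (simp add: algebra_simps)
  also have "\<dots> \<le> x powr s * (real n * (1 - r))" using 1 by (simp add: mult_left_mono)
  also have "\<dots> = real n * (x powr s / x) * (x - y)" using x0 unfolding r_def by (simp add: field_simps)
  also have "x powr s / x = x powr (s - 1)" using x0 by (simp add: powr_diff)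
  finally show ?thesis unfolding n_def .
qed

lemma neg_pow_diff:
  fixes a b p1 t :: real
  assumes "0 < a" "0 < b" "b \<le> p1*a" "a \<le> p1*b" "1 \<le> p1" "0 < t"
  shows "t * p1 powr (-t-1) * \<bar>b-a\<bar> * a powr (-t-1) \<le> \<bar>b powr -t - a powr -t\<bar>"
proof -
  have der: "\<And>x. 0 < x \<Longrightarrow> ((\<lambda>z. z powr -t) has_real_derivative (-t) * x powr (-t - 1)) (at x)"
    by (rule has_real_derivative_powr)
  have key: "p1 powr (-t-1) * a powr (-t-1) \<le> z powr (-t-1)" if "0 < z" "z \<le> p1 * a" "z \<le> a \<or> p1 \<ge> 1" for z
  proof -
    have "(p1*a) powr (-t-1) \<le> z powr (-t-1)" using powr_mono2'[of "-t-1" z "p1*a"] that assms by simp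
    then show ?thesis using assms by (simp add: powr_mult)
  qed
  consider "a < b" | "a = b" | "b < a" by linarith
  then show ?thesis
  proof cases
    case 1
    obtain z where z: "a < z" "z < b" "b powr -t - a powr -t = (b - a) * ((-t) * z powr (-t - 1))"
      using MVT2[OF 1, of "\<lambda>z. z powr -t" "\<lambda>x. (-t) * x powr (-t - 1)"] der assms by force
    have "p1 powr (-t-1) * a powr (-t-1) \<le> z powr (-t-1)" using key[of z] z assms by auto
    hence "t * p1 powr (-t-1) * \<bar>b-a\<bar> * a powr (-t-1) \<le> t * \<bar>b-a\<bar> * z powr (-t-1)"
      using assms by (simp add: mult_left_mono mult.assoc mult.left_commute)
    also have "\<dots> = \<bar>b powr -t - a powr -t\<bar>" using z 1 assms by (simp add: abs_mult)
    finally show ?thesis .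
  next
    case 2 then show ?thesis by simp
  next
    case 3
    obtain z where z: "b < z" "z < a" "a powr -t - b powr -t = (a - b) * ((-t) * z powr (-t - 1))"
      using MVT2[OF 3, of "\<lambda>z. z powr -t" "\<lambda>x. (-t) * x powr (-t - 1)"] der assms by force
    have "p1 powr (-t-1) * a powr (-t-1) \<le> z powr (-t-1)"
    proof -
      have "p1 powr (-t-1) \<le> 1" using powr_mono[of "-t-1" 0 p1] assms by simp
      moreover have "a powr (-t-1) \<le> z powr (-t-1)" using powr_mono2'[of "-t-1" z a] z assms by simp
      ultimately show ?thesis using assms
        by (meson dual_order.trans mult_left_le_one_le powr_ge_zero)
    qed
    hence "t * p1 powr (-t-1) * \<bar>b-a\<bar> * a powr (-t-1) \<le> t * \<bar>b-a\<bar> * z powr (-t-1)"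
      using assms by (simp add: mult_left_mono mult.assoc mult.left_commute)
    also have "\<dots> = \<bar>b powr -t - a powr -t\<bar>" using z 3 assms by (simp add: abs_mult abs_minus_commute)
    finally show ?thesis .
  qed
qed

lemma hsign:
  fixes m d :: real
  assumes "m > 1"
  shows "\<bar>d\<bar> powr (m-2) * d = sgn d * \<bar>d\<bar> powr (m-1)"
proof (cases "d = 0")
  case True then show ?thesis by simp
next
  case False
  have "\<bar>d\<bar> powr (m-1) = \<bar>d\<bar> powr ((m-2) + 1)" by simp
  also have "\<dots> = \<bar>d\<bar> powr (m-2) * \<bar>d\<bar> powr 1" by (rule powr_add)
  also have "\<dots> = \<bar>d\<bar> powr (m-2) * \<bar>d\<bar>" using False by simp
  finally have "\<bar>d\<bar> powr (m-1) = \<bar>d\<bar> powr (m-2) * \<bar>d\<bar>" .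
  moreover have "d = sgn d * \<bar>d\<bar>" by (simp add: sgn_mult_abs)
  ultimately show ?thesis using False by (metis mult.left_commute)
qed

lemma pair_core:
  fixes \<sigma> H F1 F2 A' B' P mu :: real
  assumes "H \<ge> 0" "mu \<ge> 0" "F1 \<ge> 0" "F2 \<ge> 0" "\<sigma>*(B'-A') = -\<bar>B'-A'\<bar>" "\<bar>\<sigma>\<bar> \<le> 1"
    "B' \<le> P*A'" "A' \<le> P*B'" "A' > 0" "B' > 0"
  shows "mu*\<sigma>*H*(F2*B' - F1*A') \<le> -(1/2)*(mu*H*\<bar>B'-A'\<bar>*F1 + mu*H*\<bar>A'-B'\<bar>*F2)
     + (if F2 < F1 then mu*H*(F1-F2)*P*A' else 0) + (if F1 < F2 then mu*H*(F2-F1)*P*B' else 0)"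
proof -
  have mh: "mu*H \<ge> 0" using assms by simp
  have ab: "\<bar>A'-B'\<bar> = \<bar>B'-A'\<bar>" by simp
  show ?thesis
  proof (cases "F2 \<le> F1")
    case True
    have e: "mu*\<sigma>*H*(F2*B' - F1*A') = (mu*H)*(F1*(\<sigma>*(B'-A'))) + (mu*H)*(\<sigma>*(F2-F1)*B')"
      by (simp add: algebra_simps)
    have 1: "\<sigma>*(F2-F1)*B' \<le> (F1-F2)*B'"
    proof -
      have "\<bar>\<sigma>*(F2-F1)\<bar> \<le> \<bar>F2-F1\<bar>" unfolding abs_mult
        using mult_left_le_one_le[of "\<bar>F2-F1\<bar>" "\<bar>\<sigma>\<bar>"] assms(6) by simp
      then have "\<sigma>*(F2-F1) \<le> \<bar>F2-F1\<bar>" by linarith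
      then have "\<sigma>*(F2-F1) \<le> F1 - F2" using True by simp
      then show ?thesis using assms(10) by (simp add: mult_right_mono)
    qed
    have 2: "(F1-F2)*B' \<le> (F1-F2)*(P*A')" using True assms(7) by (simp add: mult_left_mono)
    have 3: "F1*(\<sigma>*(B'-A')) \<le> -(1/2)*(\<bar>B'-A'\<bar>*F1 + \<bar>B'-A'\<bar>*F2)"
    proof -
      have "(F1+F2)/2*\<bar>B'-A'\<bar> \<le> F1*\<bar>B'-A'\<bar>" using True by (intro mult_right_mono) auto
      then show ?thesis unfolding assms(5) by (simp add: algebra_simps)
    qed
    have "mu*\<sigma>*H*(F2*B' - F1*A') \<le> (mu*H)*(-(1/2)*(\<bar>B'-A'\<bar>*F1 + \<bar>B'-A'\<bar>*F2)) + (mu*H)*((F1-F2)*(P*A'))"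
      unfolding e using mult_left_mono[OF 3 mh] mult_left_mono[OF order.trans[OF 1 2] mh] by linarith
    then show ?thesis using True ab by (auto simp: algebra_simps)
  next
    case False
    have e: "mu*\<sigma>*H*(F2*B' - F1*A') = (mu*H)*(F2*(\<sigma>*(B'-A'))) + (mu*H)*(\<sigma>*(F2-F1)*A')"
      by (simp add: algebra_simps)
    have 1: "\<sigma>*(F2-F1)*A' \<le> (F2-F1)*A'"
    proof -
      have "\<bar>\<sigma>*(F2-F1)\<bar> \<le> \<bar>F2-F1\<bar>" unfolding abs_mult
        using mult_left_le_one_le[of "\<bar>F2-F1\<bar>" "\<bar>\<sigma>\<bar>"] assms(6) by simp
      then have "\<sigma>*(F2-F1) \<le> \<bar>F2-F1\<bar>" by linarith
      then have "\<sigma>*(F2-F1) \<le> F2 - F1" using False by simp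
      then show ?thesis using assms(9) by (simp add: mult_right_mono)
    qed
    have 2: "(F2-F1)*A' \<le> (F2-F1)*(P*B')" using False assms(8) by (simp add: mult_left_mono)
    have 3: "F2*(\<sigma>*(B'-A')) \<le> -(1/2)*(\<bar>B'-A'\<bar>*F1 + \<bar>B'-A'\<bar>*F2)"
    proof -
      have "(F1+F2)/2*\<bar>B'-A'\<bar> \<le> F2*\<bar>B'-A'\<bar>" using False by (intro mult_right_mono) auto
      then show ?thesis unfolding assms(5) by (simp add: algebra_simps)
    qed
    have "mu*\<sigma>*H*(F2*B' - F1*A') \<le> (mu*H)*(-(1/2)*(\<bar>B'-A'\<bar>*F1 + \<bar>B'-A'\<bar>*F2)) + (mu*H)*((F2-F1)*(P*B'))"
      unfolding e using mult_left_mono[OF 3 mh] mult_left_mono[OF order.trans[OF 1 2] mh] by linarith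
    then show ?thesis using False ab by (auto simp: algebra_simps)
  qed
qed

lemma negpow_ratio:
  fixes a b p1 t :: real
  assumes "a > 0" "b > 0" "a \<le> p1 * b" "p1 > 0" "t > 0"
  shows "b powr -t \<le> p1 powr t * a powr -t"
proof -
  have "a / p1 \<le> b" using assms by (simp add: field_simps)
  then have "b powr -t \<le> (a/p1) powr -t" using powr_mono2'[of "-t" "a/p1" b] assms by simp
  also have "(a/p1) powr -t = p1 powr t * a powr -t" using assms
    by (simp add: powr_divide powr_minus field_simps)
  finally show ?thesis .
qed

lemma pair_ineq:
  fixes a b f1 f2 s t p1 m mu :: real
  assumes "a > 0" "b > 0" "a \<le> p1 * b" "b \<le> p1 * a" "p1 > 0"
    "0 \<le> f1" "0 \<le> f2" "s > 0" "t > 0" "m > 1" "mu \<ge> 0"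
  shows "- mu*(\<bar>b-a\<bar> powr (m-2)*(b-a))*(f1 powr s * a powr -t) - mu*(\<bar>a-b\<bar> powr (m-2)*(a-b))*(f2 powr s * b powr -t)
   \<le> -(1/2)*(mu*\<bar>b-a\<bar> powr (m-1)*\<bar>b powr -t - a powr -t\<bar>*f1 powr s + mu*\<bar>a-b\<bar> powr (m-1)*\<bar>a powr -t - b powr -t\<bar>*f2 powr s)
     + (if f2 < f1 then mu*\<bar>b-a\<bar> powr (m-1)*(f1 powr s - f2 powr s)*p1 powr t * a powr -t else 0)
     + (if f1 < f2 then mu*\<bar>a-b\<bar> powr (m-1)*(f2 powr s - f1 powr s)*p1 powr t * b powr -t else 0)"
proof -
  define \<sigma> where "\<sigma> = sgn (b-a)"
  define H where "H = \<bar>b-a\<bar> powr (m-1)"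
  define A' where "A' = a powr -t"
  define B' where "B' = b powr -t"
  define F1 where "F1 = f1 powr s"
  define F2 where "F2 = f2 powr s"
  have h1: "\<bar>b-a\<bar> powr (m-2)*(b-a) = \<sigma> * H" unfolding \<sigma>_def H_def using hsign[OF assms(10)] by simp
  have h2: "\<bar>a-b\<bar> powr (m-2)*(a-b) = -(\<sigma> * H)" unfolding \<sigma>_def H_def using hsign[OF assms(10), of "a-b"]
    by (simp add: abs_minus_commute) (metis minus_diff_eq sgn_minus mult_minus_left)
  have Hab: "\<bar>a-b\<bar> powr (m-1) = H" unfolding H_def by (simp add: abs_minus_commute)
  have lhs: "- mu*(\<bar>b-a\<bar> powr (m-2)*(b-a))*(f1 powr s * a powr -t) - mu*(\<bar>a-b\<bar> powr (m-2)*(a-b))*(f2 powr s * b powr -t)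
     = mu*\<sigma>*H*(F2*B' - F1*A')" unfolding h1 h2 F1_def F2_def A'_def B'_def by (simp add: algebra_simps)
  have sig: "\<sigma>*(B'-A') = -\<bar>B'-A'\<bar>"
  proof -
    consider "a < b" | "a = b" | "b < a" by linarith
    then show ?thesis
    proof cases
      case 1
      then have "B' < A'" unfolding A'_def B'_def using powr_less_mono2_neg[of "-t" a b] assms by simp
      then show ?thesis using 1 unfolding \<sigma>_def by simp
    next
      case 2 then show ?thesis unfolding \<sigma>_def A'_def B'_def by simp
    next
      case 3
      then have "A' < B'" unfolding A'_def B'_def using powr_less_mono2_neg[of "-t" b a] assms by simp
      then show ?thesis using 3 unfolding \<sigma>_def by simp
    qed
  qed
  have sig1: "\<bar>\<sigma>\<bar> \<le> 1" unfolding \<sigma>_def by (simp add: abs_sgn)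
  have BA: "B' \<le> p1 powr t * A'" unfolding A'_def B'_def using negpow_ratio[of a b p1 t] assms by simp
  have AB: "A' \<le> p1 powr t * B'" unfolding A'_def B'_def using negpow_ratio[of b a p1 t] assms by simp
  have core: "mu*\<sigma>*H*(F2*B' - F1*A') \<le> -(1/2)*(mu*H*\<bar>B'-A'\<bar>*F1 + mu*H*\<bar>A'-B'\<bar>*F2)
     + (if F2 < F1 then mu*H*(F1-F2)*(p1 powr t)*A' else 0) + (if F1 < F2 then mu*H*(F2-F1)*(p1 powr t)*B' else 0)"
    by (rule pair_core) (use assms sig sig1 BA AB in \<open>auto simp: H_def F1_def F2_def A'_def B'_def\<close>)
  have i1: "(F2 < F1) = (f2 < f1)" unfolding F1_def F2_def using assms
    by (metis not_less powr_less_mono2 powr_mono2 less_imp_le)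
  have i2: "(F1 < F2) = (f1 < f2)" unfolding F1_def F2_def using assms
    by (metis not_less powr_less_mono2 powr_mono2 less_imp_le)
  from core have core': "mu*\<sigma>*H*(F2*B' - F1*A') \<le> -(1/2)*(mu*H*\<bar>B'-A'\<bar>*F1 + mu*H*\<bar>A'-B'\<bar>*F2)
     + (if f2 < f1 then mu*H*(F1-F2)*(p1 powr t)*A' else 0) + (if f1 < f2 then mu*H*(F2-F1)*(p1 powr t)*B' else 0)"
    unfolding i1 i2 .
  show ?thesis unfolding lhs Hab using core' unfolding H_def F1_def F2_def A'_def B'_def by linarith
qed

lemma edge_young:
  fixes g ux fx fy d mu K p1 s t m p q a b c \<theta> e1 lam :: real
  assumes "g > 0" "ux > 0" "0 \<le> fy" "fy < fx" "fx \<le> 1" "s > 0" "m > 1" "mu \<ge> 0" "t > 0" "p1 > 0"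
    "a > 0" "b > 0" "c > 0" "a+b+c = 1" "m*a + q*b = m-1" "-(t+1)*a + (p-t)*b = -t" "\<theta>*c = 1"
    "s*(1-c) \<le> s-1" "\<bar>d\<bar> \<le> K*g" "e1 > 0" "lam > 0"
  shows "mu*\<bar>d\<bar> powr (m-1)*(fx powr s - fy powr s)*p1 powr t * ux powr -t
   \<le> (K powr (m-1) * real (nat \<lceil>s\<rceil>) * p1 powr t) * mu * (a*e1*(g powr m * ux powr (-t-1) * fx powr s)
      + b*lam*(fx powr s * ux powr (p-t) * g powr q) + c*(e1 powr (-a/c) * lam powr (-b/c))*(\<bar>fy - fx\<bar> powr \<theta>))"
proof -
  define Ks where "Ks = real (nat \<lceil>s\<rceil>)"
  have K0: "K \<ge> 0" using assms(1,19) by (smt (verit) abs_ge_zero zero_le_mult_iff)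
  have fx0: "fx > 0" using assms by simp
  have s1: "\<bar>d\<bar> powr (m-1) \<le> K powr (m-1) * g powr (m-1)"
  proof -
    have "\<bar>d\<bar> powr (m-1) \<le> (K*g) powr (m-1)" using powr_mono2[of "m-1" "\<bar>d\<bar>" "K*g"] assms by simp
    then show ?thesis using K0 assms(1) by (simp add: powr_mult)
  qed
  have s2: "fx powr s - fy powr s \<le> Ks * fx powr (s*(1-c)) * (fx - fy)"
  proof -
    have "fx powr s - fy powr s \<le> Ks * fx powr (s-1) * (fx - fy)"
      unfolding Ks_def using phi_pow[of fy fx s] assms by simp
    also have "\<dots> \<le> Ks * fx powr (s*(1-c)) * (fx - fy)"
    proof -
      have "fx powr (s-1) \<le> fx powr (s*(1-c))" using powr_mono'[OF assms(18), of fx] fx0 assms(5) by simp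
      moreover have "Ks \<ge> 0" unfolding Ks_def by simp
      ultimately show ?thesis using assms(4) by (simp add: mult_left_mono mult_right_mono)
    qed
    finally show ?thesis .
  qed
  define PP where "PP = g powr (m-1) * ux powr -t * fx powr (s*(1-c)) * (fx - fy)"
  have L1: "mu*\<bar>d\<bar> powr (m-1)*(fx powr s - fy powr s)*p1 powr t * ux powr -t
      \<le> mu*(K powr (m-1) * g powr (m-1))*(Ks * fx powr (s*(1-c)) * (fx - fy))*p1 powr t * ux powr -t"
  proof -
    have A: "0 \<le> fx powr s - fy powr s" using powr_mono2[of s fy fx] assms by simp
    have "\<bar>d\<bar> powr (m-1)*(fx powr s - fy powr s) \<le> (K powr (m-1) * g powr (m-1))*(Ks * fx powr (s*(1-c)) * (fx - fy))"
      using mult_mono[OF s1 s2] A by simp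
    then have "mu*(\<bar>d\<bar> powr (m-1)*(fx powr s - fy powr s))*(p1 powr t * ux powr -t) \<le> mu*((K powr (m-1) * g powr (m-1))*(Ks * fx powr (s*(1-c)) * (fx - fy)))*(p1 powr t * ux powr -t)"
      using assms(8) by (intro mult_right_mono mult_left_mono) auto
    then show ?thesis by (simp add: mult.assoc)
  qed
  also have "\<dots> = (K powr (m-1) * Ks * p1 powr t) * mu * PP" unfolding PP_def by (simp add: algebra_simps)
  finally have L2: "mu*\<bar>d\<bar> powr (m-1)*(fx powr s - fy powr s)*p1 powr t * ux powr -t \<le> (K powr (m-1) * Ks * p1 powr t) * mu * PP" .
  define lg where "lg = ln g"
  define lu where "lu = ln ux"
  define lf where "lf = ln fx"
  define ld where "ld = ln (fx - fy)"
  define l1 where "l1 = ln e1 + m*lg + (-t-1)*lu + s*lf"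
  define l2 where "l2 = ln lam + s*lf + (p-t)*lu + q*lg"
  define l3 where "l3 = (-a/c)*ln e1 + (-b/c)*ln lam + \<theta>*ld"
  have fxy: "fx - fy > 0" using assms by simp
  have e1: "exp l1 = e1*(g powr m * ux powr (-t-1) * fx powr s)"
    unfolding l1_def lg_def lu_def lf_def using assms fx0 by (simp add: powr_def exp_add)
  have e2: "exp l2 = lam*(fx powr s * ux powr (p-t) * g powr q)"
    unfolding l2_def lg_def lu_def lf_def using assms fx0 by (simp add: powr_def exp_add)
  have e3: "exp l3 = (e1 powr (-a/c) * lam powr (-b/c))*(\<bar>fy - fx\<bar> powr \<theta>)"
  proof -
    have "exp l3 = exp((-a/c)*ln e1) * exp((-b/c)*ln lam) * exp(\<theta>*ld)" unfolding l3_def by (simp only: exp_add)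
    moreover have "exp((-a/c)*ln e1) = e1 powr (-a/c)" using assms by (simp add: powr_def)
    moreover have "exp((-b/c)*ln lam) = lam powr (-b/c)" using assms by (simp add: powr_def)
    moreover have "exp(\<theta>*ld) = \<bar>fy - fx\<bar> powr \<theta>" unfolding ld_def using fxy by (simp add: powr_def abs_minus_commute)
    ultimately show ?thesis by simp
  qed
  have lin: "a*l1+b*l2+c*l3 = (m*a+q*b)*lg + (-(t+1)*a+(p-t)*b)*lu + s*(a+b)*lf + (\<theta>*c)*ld"
    unfolding l1_def l2_def l3_def using assms(13) by (simp add: field_simps)
  have ePi: "PP = exp (a*l1+b*l2+c*l3)"
  proof -
    have "a + b = 1 - c" using assms(14) by simp
    then have "a*l1+b*l2+c*l3 = (m-1)*lg + (-t)*lu + (s*(1-c))*lf + ld"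
      unfolding lin assms(15,16,17) by simp
    then have "exp (a*l1+b*l2+c*l3) = exp((m-1)*lg) * exp((-t)*lu) * exp((s*(1-c))*lf) * exp ld"
      by (simp only: exp_add)
    then show ?thesis unfolding PP_def lg_def lu_def lf_def ld_def using assms fx0 fxy
      by (simp add: powr_def)
  qed
  have "PP \<le> a*exp l1 + b*exp l2 + c*exp l3" unfolding ePi by (rule amgm3) (use assms in auto)
  then have "PP \<le> a*e1*(g powr m * ux powr (-t-1) * fx powr s) + b*lam*(fx powr s * ux powr (p-t) * g powr q) + c*(e1 powr (-a/c) * lam powr (-b/c))*(\<bar>fy - fx\<bar> powr \<theta>)"
    unfolding e1 e2 e3 by (simp add: mult.assoc)
  moreover have "K powr (m-1) * Ks * p1 powr t * mu \<ge> 0" unfolding Ks_def using assms by simp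
  ultimately show ?thesis using L2 unfolding Ks_def
    by (smt (verit) mult_left_mono)
qed

lemma wg_finite: "weighted_graph V \<mu> \<Longrightarrow> x \<in> V \<Longrightarrow> finite {y. adj \<mu> x y}"
  unfolding weighted_graph_def by auto

lemma wg_adjV: "weighted_graph V \<mu> \<Longrightarrow> adj \<mu> x y \<Longrightarrow> x \<in> V \<and> y \<in> V \<and> x \<noteq> y"
  unfolding weighted_graph_def by auto

lemma wg_sym: "weighted_graph V \<mu> \<Longrightarrow> \<mu> x y = \<mu> y x"
  unfolding weighted_graph_def by auto

lemma wg_adj_sym: "weighted_graph V \<mu> \<Longrightarrow> adj \<mu> x y \<Longrightarrow> adj \<mu> y x"
  unfolding adj_def using wg_sym by metis

lemma wdeg_nonneg: "weighted_graph V \<mu> \<Longrightarrow> wdeg \<mu> x \<ge> 0"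
  unfolding wdeg_def adj_def by (intro sum_nonneg) auto

lemma wdeg_pos: "weighted_graph V \<mu> \<Longrightarrow> adj \<mu> x y \<Longrightarrow> wdeg \<mu> x \<ge> \<mu> x y \<and> wdeg \<mu> x > 0"
proof -
  assume wg: "weighted_graph V \<mu>" and a: "adj \<mu> x y"
  have fin: "finite {y. adj \<mu> x y}" using wg_finite[OF wg] wg_adjV[OF wg a] by blast
  have "\<mu> x y \<le> wdeg \<mu> x" unfolding wdeg_def
    using member_le_sum[of y "{y. adj \<mu> x y}" "\<mu> x"] fin a unfolding adj_def by auto
  moreover have "\<mu> x y > 0" using a unfolding adj_def .
  ultimately show ?thesis by simp
qed

lemma gradn_nonneg:
  assumes "weighted_graph V \<mu>"
  shows "gradn \<mu> u x \<ge> 0"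
proof -
  have "0 \<le> (\<Sum>z\<in>{y. adj \<mu> x y}. \<mu> x z / (2 * wdeg \<mu> x) * (u z - u x)\<^sup>2)"
    using wdeg_nonneg[OF assms, of x] assms unfolding weighted_graph_def
    by (intro sum_nonneg mult_nonneg_nonneg divide_nonneg_nonneg) auto
  then show ?thesis unfolding gradn_def by simp
qed

lemma mlap_mult:
  assumes "weighted_graph V \<mu>" "x \<in> V"
  shows "wdeg \<mu> x * mlap m \<mu> u x = (\<Sum>y\<in>{y. adj \<mu> x y}. \<mu> x y * (\<bar>u y - u x\<bar> powr (m - 2) * (u y - u x)))"
proof (cases "{y. adj \<mu> x y} = {}")
  case True then show ?thesis unfolding mlap_def wdeg_def True by simp
next
  case False
  then obtain y where "adj \<mu> x y" by auto
  then have "wdeg \<mu> x > 0" using wdeg_pos[OF assms(1)] by blast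
  then show ?thesis unfolding mlap_def by simp
qed

lemma grad_edge:
  assumes wg: "weighted_graph V \<mu>" and cp: "cond_p0 \<mu> p0" and a: "adj \<mu> x y"
  shows "\<bar>u y - u x\<bar> \<le> sqrt (2*p0) * gradn \<mu> u x"
proof -
  have fin: "finite {y. adj \<mu> x y}" using wg_finite[OF wg] wg_adjV[OF wg a] by blast
  have d: "wdeg \<mu> x > 0" "\<mu> x y > 0" using wdeg_pos[OF wg a] a unfolding adj_def by auto
  have p0: "p0 > 1" "\<mu> x y / wdeg \<mu> x \<ge> 1/p0" using cp a unfolding cond_p0_def by auto
  have nn: "\<forall>z\<in>{y. adj \<mu> x y}. 0 \<le> \<mu> x z / (2 * wdeg \<mu> x) * (u z - u x)\<^sup>2"
    using d(1) unfolding adj_def by auto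
  have "\<mu> x y / (2 * wdeg \<mu> x) * (u y - u x)\<^sup>2 \<le> (\<Sum>z\<in>{y. adj \<mu> x y}. \<mu> x z / (2 * wdeg \<mu> x) * (u z - u x)\<^sup>2)"
    using member_le_sum[of y "{y. adj \<mu> x y}" "\<lambda>z. \<mu> x z / (2 * wdeg \<mu> x) * (u z - u x)\<^sup>2"] fin a nn by auto
  also have "\<dots> = (gradn \<mu> u x)\<^sup>2"
  proof -
    have S0: "0 \<le> (\<Sum>z\<in>{y. adj \<mu> x y}. \<mu> x z / (2 * wdeg \<mu> x) * (u z - u x)\<^sup>2)"
    proof (rule sum_nonneg)
      fix z assume "z \<in> {y. adj \<mu> x y}" then show "0 \<le> \<mu> x z / (2 * wdeg \<mu> x) * (u z - u x)\<^sup>2" using nn by blast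
    qed
    show ?thesis unfolding gradn_def by (simp only: real_sqrt_pow2[OF S0])
  qed
  finally have 1: "\<mu> x y / (2 * wdeg \<mu> x) * (u y - u x)\<^sup>2 \<le> (gradn \<mu> u x)\<^sup>2" .
  have "(u y - u x)\<^sup>2 / (2*p0) \<le> \<mu> x y / (2 * wdeg \<mu> x) * (u y - u x)\<^sup>2"
  proof -
    have "1/(2*p0) \<le> \<mu> x y / (2 * wdeg \<mu> x)" using p0 by (simp add: field_simps)
    then show ?thesis by (metis mult.commute mult_left_mono times_divide_eq_right zero_le_power2 mult_1)
  qed
  then have "(u y - u x)\<^sup>2 / (2*p0) \<le> (gradn \<mu> u x)\<^sup>2" using 1 by linarith
  then have "(u y - u x)\<^sup>2 \<le> 2*p0*(gradn \<mu> u x)\<^sup>2" using p0 by (simp add: pos_divide_le_eq mult.commute)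
  then have "sqrt ((u y - u x)\<^sup>2) \<le> sqrt (2*p0*(gradn \<mu> u x)\<^sup>2)" by (rule real_sqrt_le_mono)
  moreover have "gradn \<mu> u x \<ge> 0" by (rule gradn_nonneg[OF wg])
  ultimately show ?thesis using p0 by (simp add: real_sqrt_mult)
qed

lemma grad_sum:
  assumes wg: "weighted_graph V \<mu>" and cp: "cond_p0 \<mu> p0" and x: "x \<in> V" and m: "m > 0"
  shows "wdeg \<mu> x / p0 * gradn \<mu> u x powr m \<le> (\<Sum>y\<in>{y. adj \<mu> x y}. \<mu> x y * \<bar>u y - u x\<bar> powr m)"
proof (cases "{y. adj \<mu> x y} = {}")
  case True then show ?thesis unfolding wdeg_def gradn_def True by simp
next
  case False
  define Nx where "Nx = {y. adj \<mu> x y}"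
  have fin: "finite Nx" using wg_finite[OF wg x] unfolding Nx_def .
  have ne: "Nx \<noteq> {}" using False unfolding Nx_def .
  define M where "M = Max ((\<lambda>z. \<bar>u z - u x\<bar>) ` Nx)"
  have "M \<in> (\<lambda>z. \<bar>u z - u x\<bar>) ` Nx" unfolding M_def using fin ne by (intro Max_in) auto
  then obtain y where y: "y \<in> Nx" "\<bar>u y - u x\<bar> = M" by auto
  have Mge: "\<And>z. z \<in> Nx \<Longrightarrow> \<bar>u z - u x\<bar> \<le> M" unfolding M_def using fin by auto
  have a: "adj \<mu> x y" using y unfolding Nx_def by auto
  have d: "wdeg \<mu> x > 0" "\<mu> x y > 0" using wdeg_pos[OF wg a] a unfolding adj_def by auto
  have p0: "p0 > 1" "\<mu> x y / wdeg \<mu> x \<ge> 1/p0" using cp a unfolding cond_p0_def by auto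
  have "(gradn \<mu> u x)\<^sup>2 = (\<Sum>z\<in>Nx. \<mu> x z / (2 * wdeg \<mu> x) * (u z - u x)\<^sup>2)"
  proof -
    have S0: "0 \<le> (\<Sum>z\<in>{y. adj \<mu> x y}. \<mu> x z / (2 * wdeg \<mu> x) * (u z - u x)\<^sup>2)"
    proof (rule sum_nonneg)
      fix z assume "z \<in> {y. adj \<mu> x y}" then show "0 \<le> \<mu> x z / (2 * wdeg \<mu> x) * (u z - u x)\<^sup>2"
        using d(1) unfolding adj_def by simp
    qed
    show ?thesis unfolding gradn_def Nx_def by (simp only: real_sqrt_pow2[OF S0])
  qed
  also have "\<dots> \<le> (\<Sum>z\<in>Nx. \<mu> x z / (2 * wdeg \<mu> x) * M\<^sup>2)"
  proof (rule sum_mono)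
    fix z assume z: "z \<in> Nx"
    have "(u z - u x)\<^sup>2 \<le> M\<^sup>2" using Mge[OF z] by (metis abs_ge_zero power2_abs power_mono)
    moreover have "\<mu> x z / (2 * wdeg \<mu> x) \<ge> 0" using z d(1) unfolding Nx_def adj_def by simp
    ultimately show "\<mu> x z / (2 * wdeg \<mu> x) * (u z - u x)\<^sup>2 \<le> \<mu> x z / (2 * wdeg \<mu> x) * M\<^sup>2"
      by (rule mult_left_mono)
  qed
  also have "\<dots> = M\<^sup>2 / 2" using d(1) unfolding Nx_def wdeg_def[symmetric]
    by (simp add: sum_divide_distrib[symmetric] sum_distrib_right[symmetric] wdeg_def)
  also have "\<dots> \<le> M\<^sup>2" by simp
  finally have "(gradn \<mu> u x)\<^sup>2 \<le> M\<^sup>2" .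
  then have gM: "gradn \<mu> u x \<le> M" using y(2)
    by (metis abs_ge_zero abs_of_nonneg power2_le_imp_le)
  have g0: "gradn \<mu> u x \<ge> 0" by (rule gradn_nonneg[OF wg])
  have "wdeg \<mu> x / p0 * gradn \<mu> u x powr m \<le> \<mu> x y * M powr m"
  proof -
    have "wdeg \<mu> x / p0 \<le> \<mu> x y" using p0 d by (simp add: field_simps)
    moreover have "gradn \<mu> u x powr m \<le> M powr m" using powr_mono2[of m "gradn \<mu> u x" M] gM g0 m by simp
    moreover have "wdeg \<mu> x / p0 \<ge> 0" using d p0 by simp
    moreover have "gradn \<mu> u x powr m \<ge> 0" by simp
    ultimately show ?thesis by (metis mult_mono order_trans)
  qed
  also have "\<dots> = \<mu> x y * \<bar>u y - u x\<bar> powr m" using y by simp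
  also have "\<dots> \<le> (\<Sum>y\<in>Nx. \<mu> x y * \<bar>u y - u x\<bar> powr m)"
    using member_le_sum[of y Nx "\<lambda>y. \<mu> x y * \<bar>u y - u x\<bar> powr m"] fin y wg
    unfolding Nx_def weighted_graph_def by auto
  finally show ?thesis unfolding Nx_def .
qed

lemma opt_lambda:
  fixes L A B P1 P2 b c :: real
  assumes "A \<ge> 0" "B \<ge> 0" "P1 > 0" "P2 > 0" "b > 0" "c > 0"
    and H: "\<And>lam. lam > 0 \<Longrightarrow> L \<le> P1*lam*A + P2*lam powr (-b/c)*B"
  shows "L \<le> (P1+P2) * A powr (b/(b+c)) * B powr (c/(b+c))"
proof (cases "A > 0 \<and> B > 0")
  case True
  define y where "y = c/(b+c)"
  have s1: "b/(b+c) = 1 - y" unfolding y_def using assms by (simp add: field_simps)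
  have s2: "-b/(b+c) = y - 1" unfolding y_def using assms by (simp add: field_simps)
  define lam where "lam = (B/A) powr (c/(b+c))"
  have lam0: "lam > 0" unfolding lam_def using True by simp
  have e1: "lam * A = A powr (b/(b+c)) * B powr (c/(b+c))"
  proof -
    have "lam * A = exp ((c/(b+c))*(ln B - ln A)) * exp (ln A)" unfolding lam_def using True
      by (simp add: powr_def ln_div)
    also have "\<dots> = exp ((c/(b+c))*(ln B - ln A) + ln A)" by (simp only: exp_add)
    also have "(c/(b+c))*(ln B - ln A) + ln A = (b/(b+c))*ln A + (c/(b+c))*ln B"
      unfolding s1 y_def[symmetric] by (simp add: algebra_simps)
    also have "exp \<dots> = A powr (b/(b+c)) * B powr (c/(b+c))" using True by (simp add: powr_def exp_add)
    finally show ?thesis .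
  qed
  have e2: "lam powr (-b/c) * B = A powr (b/(b+c)) * B powr (c/(b+c))"
  proof -
    have "lam powr (-b/c) = (B/A) powr (-b/(b+c))" unfolding lam_def using True assms
      by (simp add: powr_powr)
    then have "lam powr (-b/c) * B = exp ((-b/(b+c))*(ln B - ln A)) * exp (ln B)" using True
      by (simp add: powr_def ln_div)
    also have "\<dots> = exp ((-b/(b+c))*(ln B - ln A) + ln B)" by (simp only: exp_add)
    finally have "lam powr (-b/c) * B = exp ((-b/(b+c))*(ln B - ln A) + ln B)" .
    also have "(-b/(b+c))*(ln B - ln A) + ln B = (b/(b+c))*ln A + (c/(b+c))*ln B"
      unfolding s1 s2 y_def[symmetric] by (simp add: algebra_simps)
    also have "exp \<dots> = A powr (b/(b+c)) * B powr (c/(b+c))" using True by (simp add: powr_def exp_add)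
    finally show ?thesis .
  qed
  have "L \<le> P1*(lam*A) + P2*(lam powr (-b/c)*B)" using H[OF lam0] by (simp add: mult.assoc)
  then show ?thesis unfolding e1 e2 by (simp add: algebra_simps)
next
  case False
  have "L \<le> 0"
  proof (rule ccontr)
    assume L: "\<not> L \<le> 0"
    show False
    proof (cases "A = 0")
      case True
      show False
      proof (cases "B = 0")
        case True
        then show False using H[of 1] L \<open>A = 0\<close> by simp
      next
        case False
        then have B0: "B > 0" using assms by simp
        define lam where "lam = (2*P2*B/L) powr (c/b)"
        have lam0: "lam > 0" unfolding lam_def using B0 L assms by simp
        have "lam powr (-b/c) = (2*P2*B/L) powr (-1)" unfolding lam_def using assms B0 L
          by (simp add: powr_powr)
        also have "\<dots> = L/(2*P2*B)" using assms B0 L by (simp add: powr_minus_divide)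
        finally have "P2*lam powr (-b/c)*B = L/2" using assms B0 by (simp add: field_simps)
        then show False using H[OF lam0] True L by simp
      qed
    next
      case False
      then have A0: "A > 0" "B = 0" using assms \<open>\<not> (A > 0 \<and> B > 0)\<close> by auto
      define lam where "lam = L/(2*P1*A)"
      have lam0: "lam > 0" unfolding lam_def using A0 L assms by simp
      have "P1*lam*A = L/2" unfolding lam_def using A0 assms by (simp add: field_simps)
      then show False using H[OF lam0] A0 L by simp
    qed
  qed
  moreover have "A powr (b/(b+c)) * B powr (c/(b+c)) = 0" using False assms by auto
  ultimately show ?thesis by (metis mult.assoc mult_zero_right)
qed

lemma second_ineq:
  fixes L A B C \<alpha> \<beta> :: real
  assumes "L \<ge> 0" "0 \<le> A" "A \<le> L" "B \<ge> 0" "C > 0" "0 < \<alpha>" "\<alpha> < 1" "\<beta> = 1 - \<alpha>"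
    and H: "L \<le> C * A powr \<alpha> * B powr \<beta>"
  shows "L \<le> C powr (1/\<beta>) * B"
proof (cases "L = 0")
  case True then show ?thesis using assms by simp
next
  case False
  then have L0: "L > 0" using assms by simp
  have "A powr \<alpha> \<le> L powr \<alpha>" using powr_mono2[of \<alpha> A L] assms by simp
  then have "L \<le> C * L powr \<alpha> * B powr \<beta>" using H assms
    by (smt (verit, ccfv_SIG) mult_left_mono mult_right_mono powr_ge_zero zero_le_mult_iff)
  moreover have "L = L powr \<alpha> * L powr \<beta>" using L0 assms by (simp add: powr_add[symmetric])
  ultimately have "L powr \<alpha> * L powr \<beta> \<le> L powr \<alpha> * (C * B powr \<beta>)" by (simp add: algebra_simps)
  then have 1: "L powr \<beta> \<le> C * B powr \<beta>" using L0 by (simp add: mult_le_cancel_left_pos)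
  have b0: "\<beta> > 0" using assms by simp
  have "(L powr \<beta>) powr (1/\<beta>) \<le> (C * B powr \<beta>) powr (1/\<beta>)"
    using powr_mono2[of "1/\<beta>" "L powr \<beta>" "C * B powr \<beta>"] 1 b0 by simp
  moreover have "(L powr \<beta>) powr (1/\<beta>) = L" using b0 L0 by (simp add: powr_powr)
  moreover have "(C * B powr \<beta>) powr (1/\<beta>) = C powr (1/\<beta>) * B" using b0 assms
    by (simp add: powr_mult powr_powr)
  ultimately show ?thesis by simp
qed

lemma cpow_nonneg: "cpow x a \<ge> 0 \<or> x < 0"
  unfolding cpow_def by auto

lemma cpow_nonneg': "x \<ge> 0 \<Longrightarrow> cpow x a \<ge> 0"
  unfolding cpow_def by auto

lemma cpow_pos: "x > 0 \<Longrightarrow> cpow x a = x powr a"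
  unfolding cpow_def by auto

lemma powr_m1_abs: "m > 1 \<Longrightarrow> \<bar>d::real\<bar> powr (m-1) * \<bar>d\<bar> = \<bar>d\<bar> powr m"
proof (cases "d = 0")
  case True then show ?thesis by simp
next
  case False
  assume "m > 1"
  have "\<bar>d\<bar> powr m = \<bar>d\<bar> powr ((m-1) + 1)" by simp
  also have "\<dots> = \<bar>d\<bar> powr (m-1) * \<bar>d\<bar> powr 1" by (rule powr_add)
  finally show ?thesis using False by simp
qed

lemma core_ineq:
  fixes V :: "nat set" and \<mu> :: "nat \<Rightarrow> nat \<Rightarrow> real" and \<Omega> :: "nat set" and u \<phi> :: "nat \<Rightarrow> real"
    and p0 p1 m p q s t a b c \<theta> lam K0 e1 :: real
  assumes wg: "weighted_graph V \<mu>" and cp: "cond_p0 \<mu> p0" and OV: "\<Omega> \<subseteq> V"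
    and upos: "\<forall>x\<in>V. u x > 0"
    and eq: "\<forall>x\<in>\<Omega>. (q < 0 \<longrightarrow> gradn \<mu> u x > 0) \<and> mlap m \<mu> u x + u x powr p * cpow (gradn \<mu> u x) q \<le> 0"
    and rat: "\<forall>x y. adj \<mu> x y \<longrightarrow> 1 / p1 \<le> u x / u y \<and> u x / u y \<le> p1"
    and bd: "\<Omega> \<noteq> V \<longrightarrow> (\<forall>x\<in>\<Omega>. \<forall>y\<in>V - \<Omega>. adj \<mu> x y \<longrightarrow> u y \<ge> u x)"
    and phr: "\<forall>x. 0 \<le> \<phi> x \<and> \<phi> x \<le> 1" and phf: "finite {x. \<phi> x \<noteq> 0}" and phs: "{x. \<phi> x \<noteq> 0} \<subseteq> \<Omega>"
    and pars: "p1 > 1" "m > 1" "s > 0" "t > 0" "a > 0" "b > 0" "c > 0" "a+b+c = 1"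
      "m*a + q*b = m-1" "-(t+1)*a + (p-t)*b = -t" "\<theta>*c = 1" "s*(1-c) \<le> s-1" "lam > 0"
    and K0_def: "K0 = sqrt (2*p0) powr (m-1) * real (nat \<lceil>s\<rceil>) * p1 powr t"
    and e1_def: "e1 = (t * p1 powr (-t-1) / p0) / (2*K0*a)"
  defines "E \<equiv> {(x, y). x \<in> \<Omega> \<and> y \<in> \<Omega> \<and> adj \<mu> x y \<and> \<phi> y - \<phi> x \<noteq> 0}"
  shows "(\<Sum>x\<in>{x\<in>\<Omega>. \<phi> x \<noteq> 0}. wdeg \<mu> x * u x powr (p - t) * cpow (gradn \<mu> u x) q * \<phi> x powr s)
     \<le> (K0*b)*lam*(\<Sum>(x, y)\<in>E. \<mu> x y * \<phi> x powr s * u x powr (p - t) * cpow (gradn \<mu> u x) q)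
       + (K0*c*e1 powr (-a/c))*lam powr (-b/c)*(\<Sum>(x, y)\<in>E. \<mu> x y * \<bar>\<phi> y - \<phi> x\<bar> powr \<theta>)"
proof -
  have p0: "p0 > 1" using cp unfolding cond_p0_def by simp
  define S where "S = {x\<in>\<Omega>. \<phi> x \<noteq> 0}"
  have finS: "finite S" using phf unfolding S_def by (rule rev_finite_subset) auto
  have SO: "S \<subseteq> \<Omega>" unfolding S_def by auto
  define Nb where "Nb x = {y. adj \<mu> x y}" for x
  have finNb: "\<And>x. x \<in> V \<Longrightarrow> finite (Nb x)" unfolding Nb_def using wg_finite[OF wg] .
  define g where "g x = gradn \<mu> u x" for x
  define h where "h x y = \<bar>u y - u x\<bar> powr (m-2) * (u y - u x)" for x y
  define w where "w x = \<phi> x powr s * u x powr -t" for x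
  define f where "f x y = - \<mu> x y * h x y * w x" for x y
  define Gd where "Gd x y = \<mu> x y * \<bar>u y - u x\<bar> powr (m-1) * \<bar>u y powr -t - u x powr -t\<bar> * \<phi> x powr s" for x y
  define Bd where "Bd x y = (if \<phi> y < \<phi> x then \<mu> x y * \<bar>u y - u x\<bar> powr (m-1) * (\<phi> x powr s - \<phi> y powr s) * p1 powr t * u x powr -t else 0)" for x y
  define X1 where "X1 x = g x powr m * u x powr (-t-1) * \<phi> x powr s" for x
  define c2 where "c2 = t * p1 powr (-t-1) / p0"
  define Aterm where "Aterm x y = \<mu> x y * \<phi> x powr s * u x powr (p - t) * cpow (g x) q" for x y
  define Bterm where "Bterm x y = \<mu> x y * \<bar>\<phi> y - \<phi> x\<bar> powr \<theta>" for x y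
  define e3 where "e3 = e1 powr (-a/c) * lam powr (-b/c)"
  define T where "T x = {y \<in> Nb x \<inter> \<Omega>. \<phi> y \<noteq> \<phi> x}" for x
  have mu0: "\<And>x y. \<mu> x y \<ge> 0" using wg unfolding weighted_graph_def by auto
  have musym: "\<And>x y. \<mu> x y = \<mu> y x" using wg_sym[OF wg] .
  have adjsym: "\<And>x y. adj \<mu> x y \<Longrightarrow> adj \<mu> y x" using wg_adj_sym[OF wg] .
  have adjV: "\<And>x y. adj \<mu> x y \<Longrightarrow> x \<in> V \<and> y \<in> V" using wg_adjV[OF wg] by blast
  have ratio: "\<And>x y. adj \<mu> x y \<Longrightarrow> u x \<le> p1 * u y \<and> u y \<le> p1 * u x"
  proof -
    fix x y assume a: "adj \<mu> x y"
    have ux: "u x > 0" "u y > 0" using upos adjV[OF a] by auto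
    have "1 / p1 \<le> u x / u y" "u x / u y \<le> p1" using rat a by auto
    then show "u x \<le> p1 * u y \<and> u y \<le> p1 * u x" using ux pars(1)
      by (auto simp: field_simps)
  qed
  have K0pos: "K0 > 0" unfolding K0_def using p0 pars by simp
  have c2pos: "c2 > 0" unfolding c2_def using p0 pars by simp
  have e1pos: "e1 > 0" unfolding e1_def c2_def[symmetric] using c2pos K0pos pars by simp
  have K0e1: "K0 * a * e1 = c2 / 2" unfolding e1_def c2_def[symmetric] using K0pos pars by (simp add: field_simps)
  have phi_s0: "\<And>x. \<phi> x = 0 \<Longrightarrow> \<phi> x powr s = 0" by simp
  have Gd0: "\<And>x y. Gd x y \<ge> 0" unfolding Gd_def using mu0 by simp
  have stepV: "wdeg \<mu> x * u x powr (p - t) * cpow (gradn \<mu> u x) q * \<phi> x powr s \<le> (\<Sum>y\<in>Nb x. f x y)"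
    if xS: "x \<in> S" for x
  proof -
    have xO: "x \<in> \<Omega>" and xV: "x \<in> V" using xS SO OV by auto
    have ux: "u x > 0" using upos xV by auto
    have e: "mlap m \<mu> u x + u x powr p * cpow (gradn \<mu> u x) q \<le> 0" using eq xO by auto
    have d0: "wdeg \<mu> x \<ge> 0" by (rule wdeg_nonneg[OF wg])
    have ml: "wdeg \<mu> x * mlap m \<mu> u x = (\<Sum>y\<in>Nb x. \<mu> x y * h x y)"
      unfolding Nb_def h_def by (rule mlap_mult[OF wg xV])
    have "wdeg \<mu> x * (u x powr p * cpow (gradn \<mu> u x) q) \<le> wdeg \<mu> x * (- mlap m \<mu> u x)"
      using e d0 by (intro mult_left_mono) auto
    also have "\<dots> = - (\<Sum>y\<in>Nb x. \<mu> x y * h x y)" using ml by simp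
    finally have 1: "wdeg \<mu> x * (u x powr p * cpow (gradn \<mu> u x) q) \<le> - (\<Sum>y\<in>Nb x. \<mu> x y * h x y)" .
    have w0: "w x \<ge> 0" unfolding w_def by simp
    have "wdeg \<mu> x * (u x powr p * cpow (gradn \<mu> u x) q) * w x \<le> - (\<Sum>y\<in>Nb x. \<mu> x y * h x y) * w x"
      using mult_right_mono[OF 1 w0] .
    also have "\<dots> = (\<Sum>y\<in>Nb x. f x y)" unfolding f_def by (simp add: sum_distrib_right sum_negf)
    also have "wdeg \<mu> x * (u x powr p * cpow (gradn \<mu> u x) q) * w x = wdeg \<mu> x * u x powr (p - t) * cpow (gradn \<mu> u x) q * \<phi> x powr s"
    proof -
      have "u x powr p * u x powr -t = u x powr (p - t)" using ux by (simp add: powr_add[symmetric])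
      then show ?thesis unfolding w_def by (simp add: algebra_simps)
    qed
    finally show ?thesis .
  qed
  have stepO: "f x y \<le> - Gd x y" if xS: "x \<in> S" and yN: "y \<in> Nb x - \<Omega>" for x y
  proof -
    have a: "adj \<mu> x y" and yO: "y \<notin> \<Omega>" using yN unfolding Nb_def by auto
    have xO: "x \<in> \<Omega>" using xS SO by auto
    have yV: "y \<in> V" and xV: "x \<in> V" using adjV[OF a] by auto
    have uxy: "u y \<ge> u x" using bd xO yV yO a by auto
    have ux: "u x > 0" "u y > 0" using upos xV yV by auto
    have hh: "h x y = \<bar>u y - u x\<bar> powr (m-1)"
    proof (cases "u y = u x")
      case True then show ?thesis unfolding h_def by simp
    next
      case False
      then have "u y - u x > 0" using uxy by simp
      then show ?thesis unfolding h_def using hsign[OF pars(2), of "u y - u x"] by simp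
    qed
    have q1: "u y powr -t \<le> u x powr -t" using powr_mono2'[of "-t" "u x" "u y"] ux uxy pars by simp
    have q2: "u y powr -t \<ge> 0" by simp
    have "\<bar>u y powr -t - u x powr -t\<bar> \<le> u x powr -t" using q1 q2 by simp
    then have "Gd x y \<le> \<mu> x y * \<bar>u y - u x\<bar> powr (m-1) * u x powr -t * \<phi> x powr s"
      unfolding Gd_def using mu0[of x y] by (intro mult_right_mono mult_left_mono) auto
    also have "\<dots> = - f x y" unfolding f_def hh w_def by (simp add: algebra_simps)
    finally show ?thesis by simp
  qed
  define R where "R = {(x, y). x \<in> \<Omega> \<and> y \<in> \<Omega> \<and> adj \<mu> x y \<and> (\<phi> x \<noteq> 0 \<or> \<phi> y \<noteq> 0)}"
  define Q where "Q = Sigma S (\<lambda>x. Nb x \<inter> \<Omega>)"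
  have finQ: "finite Q" unfolding Q_def using finS finNb SO OV by (intro finite_SigmaI) auto
  have QR: "Q \<subseteq> R" unfolding Q_def R_def S_def Nb_def by auto
  have RQ: "R \<subseteq> Q \<union> prod.swap ` Q"
  proof
    fix z assume z: "z \<in> R"
    obtain x y where xy: "z = (x, y)" by (cases z)
    show "z \<in> Q \<union> prod.swap ` Q"
    proof (cases "\<phi> x \<noteq> 0")
      case True then show ?thesis using z xy unfolding R_def Q_def S_def Nb_def by auto
    next
      case False
      then have "(y, x) \<in> Q" using z xy adjsym unfolding R_def Q_def S_def Nb_def by auto
      then show ?thesis using xy by force
    qed
  qed
  have finR: "finite R" using RQ finQ by (meson finite_UnI finite_imageI rev_finite_subset)
  have conv: "(\<Sum>x\<in>S. \<Sum>y\<in>Nb x \<inter> \<Omega>. F x y) = (\<Sum>(x, y)\<in>R. F x y)"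
    if F0: "\<And>x y. \<phi> x = 0 \<Longrightarrow> F x y = 0" for F
  proof -
    have "(\<Sum>x\<in>S. \<Sum>y\<in>Nb x \<inter> \<Omega>. F x y) = (\<Sum>(x, y)\<in>Q. F x y)"
      unfolding Q_def using finS finNb SO OV by (intro sum.Sigma) auto
    also have "\<dots> = (\<Sum>(x, y)\<in>R. F x y)"
    proof (rule sum.mono_neutral_left[OF finR QR])
      show "\<forall>i\<in>R - Q. (case i of (x, y) \<Rightarrow> F x y) = 0"
      proof
        fix i assume i: "i \<in> R - Q"
        obtain x y where xy: "i = (x, y)" by (cases i)
        have "\<phi> x = 0" using i xy unfolding R_def Q_def S_def Nb_def by auto
        then show "(case i of (x, y) \<Rightarrow> F x y) = 0" using xy F0 by simp
      qed
    qed
    finally show ?thesis .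
  qed
  have swap: "(\<Sum>(x, y)\<in>R. F y x) = (\<Sum>(x, y)\<in>R. F x y)" for F
  proof (rule sum.reindex_bij_witness[of _ prod.swap prod.swap])
    show "\<And>a. a \<in> R \<Longrightarrow> prod.swap (prod.swap a) = a" by simp
    show "\<And>a. a \<in> R \<Longrightarrow> prod.swap a \<in> R" unfolding R_def using adjsym by auto
    show "\<And>b. b \<in> R \<Longrightarrow> prod.swap (prod.swap b) = b" by simp
    show "\<And>b. b \<in> R \<Longrightarrow> prod.swap b \<in> R" unfolding R_def using adjsym by auto
    show "\<And>a. a \<in> R \<Longrightarrow> (case prod.swap a of (x, y) \<Rightarrow> F x y) = (case a of (x, y) \<Rightarrow> F y x)"
      by auto
  qed
  have pair: "f x y + f y x \<le> -(1/2)*(Gd x y + Gd y x) + Bd x y + Bd y x" if xy: "(x, y) \<in> R" for x y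
  proof -
    have a: "adj \<mu> x y" using xy unfolding R_def by auto
    have ux: "u x > 0" "u y > 0" using upos adjV[OF a] by auto
    have r: "u x \<le> p1 * u y" "u y \<le> p1 * u x" using ratio[OF a] by auto
    have p1pos: "p1 > 0" using pars by simp
    have ph0: "0 \<le> \<phi> x" "0 \<le> \<phi> y" using phr by auto
    have P: "- \<mu> x y*(\<bar>u y - u x\<bar> powr (m-2)*(u y - u x))*(\<phi> x powr s * u x powr -t) - \<mu> x y*(\<bar>u x - u y\<bar> powr (m-2)*(u x - u y))*(\<phi> y powr s * u y powr -t)
     \<le> -(1/2)*(\<mu> x y*\<bar>u y - u x\<bar> powr (m-1)*\<bar>u y powr -t - u x powr -t\<bar>*\<phi> x powr s + \<mu> x y*\<bar>u x - u y\<bar> powr (m-1)*\<bar>u x powr -t - u y powr -t\<bar>*\<phi> y powr s)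
     + (if \<phi> y < \<phi> x then \<mu> x y*\<bar>u y - u x\<bar> powr (m-1)*(\<phi> x powr s - \<phi> y powr s)*p1 powr t * u x powr -t else 0)
     + (if \<phi> x < \<phi> y then \<mu> x y*\<bar>u x - u y\<bar> powr (m-1)*(\<phi> y powr s - \<phi> x powr s)*p1 powr t * u y powr -t else 0)"
      by (rule pair_ineq[OF ux(1) ux(2) r(1) r(2) p1pos ph0(1) ph0(2) pars(3) pars(4) pars(2) mu0])
    show ?thesis using P unfolding f_def Gd_def Bd_def h_def w_def musym[of y x]
      by (simp add: algebra_simps)
  qed
  have f0: "\<And>x y. \<phi> x = 0 \<Longrightarrow> f x y = 0" unfolding f_def w_def by simp
  have Gd00: "\<And>x y. \<phi> x = 0 \<Longrightarrow> Gd x y = 0" unfolding Gd_def by simp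
  have Bd0: "\<And>x y. \<phi> x = 0 \<Longrightarrow> Bd x y = 0"
  proof -
    fix x y assume "\<phi> x = 0"
    moreover have "0 \<le> \<phi> y" using phr by auto
    ultimately show "Bd x y = 0" unfolding Bd_def by auto
  qed
  have stepI: "(\<Sum>x\<in>S. \<Sum>y\<in>Nb x \<inter> \<Omega>. f x y) \<le> -(1/2)*(\<Sum>x\<in>S. \<Sum>y\<in>Nb x \<inter> \<Omega>. Gd x y) + (\<Sum>x\<in>S. \<Sum>y\<in>Nb x \<inter> \<Omega>. Bd x y)"
  proof -
    have "2*(\<Sum>(x, y)\<in>R. f x y) = (\<Sum>(x, y)\<in>R. f x y) + (\<Sum>(x, y)\<in>R. f y x)" using swap[of f] by simp
    also have "\<dots> = (\<Sum>(x, y)\<in>R. f x y + f y x)" by (simp add: sum.distrib[symmetric] case_prod_beta)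
    also have "\<dots> \<le> (\<Sum>(x, y)\<in>R. -(1/2)*(Gd x y + Gd y x) + Bd x y + Bd y x)"
      using pair by (intro sum_mono) (auto simp: case_prod_beta)
    also have "\<dots> = (\<Sum>z\<in>R. -(1/2)*((case_prod Gd) z + (case_prod (\<lambda>x y. Gd y x)) z) + (case_prod Bd) z + (case_prod (\<lambda>x y. Bd y x)) z)"
      by (rule sum.cong) auto
    also have "\<dots> = -(1/2)*((\<Sum>(x, y)\<in>R. Gd x y) + (\<Sum>(x, y)\<in>R. Gd y x)) + (\<Sum>(x, y)\<in>R. Bd x y) + (\<Sum>(x, y)\<in>R. Bd y x)"
      by (simp only: sum.distrib sum_distrib_left[symmetric])
    also have "\<dots> = 2*(-(1/2)*(\<Sum>(x, y)\<in>R. Gd x y) + (\<Sum>(x, y)\<in>R. Bd x y))" using swap[of Gd] swap[of Bd] by simp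
    finally have "(\<Sum>(x, y)\<in>R. f x y) \<le> -(1/2)*(\<Sum>(x, y)\<in>R. Gd x y) + (\<Sum>(x, y)\<in>R. Bd x y)" by simp
    then show ?thesis using conv[of f, OF f0] conv[of Gd, OF Gd00] conv[of Bd, OF Bd0] by simp
  qed
  have stepGd: "c2 * wdeg \<mu> x * X1 x \<le> (\<Sum>y\<in>Nb x. Gd x y)" if xS: "x \<in> S" for x
  proof -
    have xV: "x \<in> V" using xS SO OV by auto
    have ux: "u x > 0" using upos xV by auto
    define c1 where "c1 = t * p1 powr (-t-1)"
    have c10: "c1 \<ge> 0" unfolding c1_def using pars by simp
    have each: "c1 * u x powr (-t-1) * \<phi> x powr s * (\<mu> x y * \<bar>u y - u x\<bar> powr m) \<le> Gd x y" if yN: "y \<in> Nb x" for y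
    proof -
      have a: "adj \<mu> x y" using yN unfolding Nb_def by auto
      have uy: "u y > 0" using upos adjV[OF a] by auto
      have r: "u x \<le> p1 * u y" "u y \<le> p1 * u x" using ratio[OF a] by auto
      have np: "c1 * \<bar>u y - u x\<bar> * u x powr (-t-1) \<le> \<bar>u y powr -t - u x powr -t\<bar>"
        unfolding c1_def using neg_pow_diff[OF ux uy r(2) r(1) _ pars(4)] pars(1) by simp
      have "c1 * u x powr (-t-1) * \<phi> x powr s * (\<mu> x y * \<bar>u y - u x\<bar> powr m)
          = (\<mu> x y * \<bar>u y - u x\<bar> powr (m-1) * \<phi> x powr s) * (c1 * \<bar>u y - u x\<bar> * u x powr (-t-1))"
        using powr_m1_abs[OF pars(2), of "u y - u x"] by (simp add: algebra_simps)
      also have "\<dots> \<le> (\<mu> x y * \<bar>u y - u x\<bar> powr (m-1) * \<phi> x powr s) * \<bar>u y powr -t - u x powr -t\<bar>"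
        using np mu0[of x y] by (intro mult_left_mono) auto
      also have "\<dots> = Gd x y" unfolding Gd_def by (simp add: algebra_simps)
      finally show ?thesis .
    qed
    have "c2 * wdeg \<mu> x * X1 x = c1 * u x powr (-t-1) * \<phi> x powr s * (wdeg \<mu> x / p0 * g x powr m)"
      unfolding c2_def c1_def X1_def by (simp add: algebra_simps)
    also have "\<dots> \<le> c1 * u x powr (-t-1) * \<phi> x powr s * (\<Sum>y\<in>Nb x. \<mu> x y * \<bar>u y - u x\<bar> powr m)"
      using grad_sum[OF wg cp xV, of m u] pars c10 unfolding g_def Nb_def
      by (intro mult_left_mono) auto
    also have "\<dots> = (\<Sum>y\<in>Nb x. c1 * u x powr (-t-1) * \<phi> x powr s * (\<mu> x y * \<bar>u y - u x\<bar> powr m))"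
      by (simp add: sum_distrib_left)
    also have "\<dots> \<le> (\<Sum>y\<in>Nb x. Gd x y)" using each by (rule sum_mono)
    finally show ?thesis .
  qed
  have stepBd: "(\<Sum>y\<in>Nb x \<inter> \<Omega>. Bd x y) \<le> (c2/2) * wdeg \<mu> x * X1 x + K0*b*lam*(\<Sum>y\<in>T x. Aterm x y) + K0*c*e3*(\<Sum>y\<in>T x. Bterm x y)"
    if xS: "x \<in> S" for x
  proof -
    have xV: "x \<in> V" and xO: "x \<in> \<Omega>" using xS SO OV by auto
    have ux: "u x > 0" using upos xV by auto
    have finT: "finite (T x)" unfolding T_def using finNb[OF xV] by simp
    have TN: "T x \<subseteq> Nb x \<inter> \<Omega>" unfolding T_def by auto
    have X10: "X1 x \<ge> 0" unfolding X1_def by simp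
    have e30: "e3 > 0" unfolding e3_def using e1pos pars by simp
    have g0: "g x \<ge> 0" unfolding g_def by (rule gradn_nonneg[OF wg])
    have each: "Bd x y \<le> K0*(a*e1*(\<mu> x y * X1 x) + b*lam*Aterm x y + c*e3*Bterm x y)" if yT: "y \<in> T x" for y
    proof -
      have a: "adj \<mu> x y" using yT unfolding T_def Nb_def by auto
      have rhs0: "0 \<le> K0*(a*e1*(\<mu> x y * X1 x) + b*lam*Aterm x y + c*e3*Bterm x y)"
        unfolding Aterm_def Bterm_def using K0pos pars e1pos e30 X10 mu0[of x y] cpow_nonneg'[OF g0, of q]
        by (intro mult_nonneg_nonneg add_nonneg_nonneg) auto
      show ?thesis
      proof (cases "\<phi> y < \<phi> x")
        case False then show ?thesis using rhs0 unfolding Bd_def by simp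
      next
        case True
        show ?thesis
        proof (cases "g x > 0")
          case gpos: True
          have ge: "\<bar>u y - u x\<bar> \<le> sqrt (2*p0) * g x" unfolding g_def by (rule grad_edge[OF wg cp a])
          have EY: "\<mu> x y*\<bar>u y - u x\<bar> powr (m-1)*(\<phi> x powr s - \<phi> y powr s)*p1 powr t * u x powr -t
            \<le> (sqrt (2*p0) powr (m-1) * real (nat \<lceil>s\<rceil>) * p1 powr t) * \<mu> x y * (a*e1*(g x powr m * u x powr (-t-1) * \<phi> x powr s)
             + b*lam*(\<phi> x powr s * u x powr (p-t) * g x powr q) + c*(e1 powr (-a/c) * lam powr (-b/c))*(\<bar>\<phi> y - \<phi> x\<bar> powr \<theta>))"
            by (rule edge_young[OF gpos ux _ True _ pars(3) pars(2) mu0 pars(4) _ pars(5) pars(6) pars(7) pars(8) pars(9) pars(10) pars(11) pars(12) ge e1pos pars(13)])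
               (use phr pars in auto)
          show ?thesis using EY unfolding Bd_def K0_def[symmetric] e3_def[symmetric] Aterm_def Bterm_def X1_def
            cpow_pos[OF gpos] using True by (simp add: algebra_simps)
        next
          case False
          then have gz: "g x = 0" using g0 by simp
          have "\<bar>u y - u x\<bar> \<le> sqrt (2*p0) * g x" unfolding g_def by (rule grad_edge[OF wg cp a])
          then have "u y - u x = 0" using gz by simp
          then have "Bd x y = 0" unfolding Bd_def using pars by simp
          then show ?thesis using rhs0 by simp
        qed
      qed
    qed
    have "(\<Sum>y\<in>Nb x \<inter> \<Omega>. Bd x y) = (\<Sum>y\<in>T x. Bd x y)"
    proof (rule sum.mono_neutral_right)
      show "finite (Nb x \<inter> \<Omega>)" using finNb[OF xV] by simp
      show "T x \<subseteq> Nb x \<inter> \<Omega>" by (rule TN)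
      show "\<forall>i\<in>Nb x \<inter> \<Omega> - T x. Bd x i = 0" unfolding T_def Bd_def by auto
    qed
    also have "\<dots> \<le> (\<Sum>y\<in>T x. K0*(a*e1*(\<mu> x y * X1 x) + b*lam*Aterm x y + c*e3*Bterm x y))"
      using each by (rule sum_mono)
    also have "\<dots> = (K0*a*e1) * X1 x * (\<Sum>y\<in>T x. \<mu> x y) + K0*b*lam*(\<Sum>y\<in>T x. Aterm x y) + K0*c*e3*(\<Sum>y\<in>T x. Bterm x y)"
      by (simp add: sum.distrib sum_distrib_left sum_distrib_right algebra_simps)
    also have "(\<Sum>y\<in>T x. \<mu> x y) \<le> wdeg \<mu> x"
    proof -
      have "(\<Sum>y\<in>T x. \<mu> x y) \<le> (\<Sum>y\<in>Nb x. \<mu> x y)"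
        using TN finNb[OF xV] mu0 by (intro sum_mono2) auto
      then show ?thesis unfolding wdeg_def Nb_def .
    qed
    then have "(K0*a*e1) * X1 x * (\<Sum>y\<in>T x. \<mu> x y) \<le> (c2/2) * wdeg \<mu> x * X1 x"
      unfolding K0e1 using X10 c2pos by (simp add: mult_left_mono mult.commute mult.left_commute)
    finally show ?thesis by simp
  qed
  define FI where "FI x = (\<Sum>y\<in>Nb x \<inter> \<Omega>. f x y)" for x
  define GI where "GI x = (\<Sum>y\<in>Nb x \<inter> \<Omega>. Gd x y)" for x
  define GO where "GO x = (\<Sum>y\<in>Nb x - \<Omega>. Gd x y)" for x
  define BI where "BI x = (\<Sum>y\<in>Nb x \<inter> \<Omega>. Bd x y)" for x
  define AT where "AT x = (\<Sum>y\<in>T x. Aterm x y)" for x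
  define BT where "BT x = (\<Sum>y\<in>T x. Bterm x y)" for x
  have L1: "(\<Sum>x\<in>S. wdeg \<mu> x * u x powr (p - t) * cpow (gradn \<mu> u x) q * \<phi> x powr s) \<le> (\<Sum>x\<in>S. FI x - GO x)"
  proof (rule sum_mono)
    fix x assume xS: "x \<in> S"
    have xV: "x \<in> V" using xS SO OV by auto
    have "(\<Sum>y\<in>Nb x. f x y) = FI x + (\<Sum>y\<in>Nb x - \<Omega>. f x y)" unfolding FI_def
      by (rule sum.Int_Diff[OF finNb[OF xV]])
    also have "(\<Sum>y\<in>Nb x - \<Omega>. f x y) \<le> - GO x" unfolding GO_def
    proof -
      have "(\<Sum>y\<in>Nb x - \<Omega>. f x y) \<le> (\<Sum>y\<in>Nb x - \<Omega>. - Gd x y)"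
        using stepO[OF xS] by (rule sum_mono)
      then show "(\<Sum>y\<in>Nb x - \<Omega>. f x y) \<le> - (\<Sum>y\<in>Nb x - \<Omega>. Gd x y)" by (simp add: sum_negf)
    qed
    finally have "(\<Sum>y\<in>Nb x. f x y) \<le> FI x - GO x" by simp
    then show "wdeg \<mu> x * u x powr (p - t) * cpow (gradn \<mu> u x) q * \<phi> x powr s \<le> FI x - GO x"
      using stepV[OF xS] by simp
  qed
  have L2: "(\<Sum>x\<in>S. FI x - GO x) \<le> (\<Sum>x\<in>S. -(1/2)*GI x + BI x - GO x)"
    using stepI unfolding FI_def GI_def BI_def by (simp add: sum_subtractf sum.distrib sum_distrib_left)
  have L3: "(\<Sum>x\<in>S. -(1/2)*GI x + BI x - GO x) \<le> (\<Sum>x\<in>S. K0*b*lam*AT x + K0*c*e3*BT x)"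
  proof (rule sum_mono)
    fix x assume xS: "x \<in> S"
    have xV: "x \<in> V" using xS SO OV by auto
    have "(\<Sum>y\<in>Nb x. Gd x y) = GI x + GO x" unfolding GI_def GO_def by (rule sum.Int_Diff[OF finNb[OF xV]])
    moreover have "GO x \<ge> 0" unfolding GO_def using Gd0 by (simp add: sum_nonneg)
    moreover note stepGd[OF xS] stepBd[OF xS]
    ultimately show "-(1/2)*GI x + BI x - GO x \<le> K0*b*lam*AT x + K0*c*e3*BT x"
      unfolding BI_def AT_def BT_def by linarith
  qed
  have finE: "finite E"
  proof (rule rev_finite_subset[OF finR])
    show "E \<subseteq> R" unfolding E_def R_def by auto
  qed
  have SigE: "Sigma S T \<subseteq> E" unfolding E_def S_def T_def Nb_def by auto
  have finT: "\<And>x. x \<in> S \<Longrightarrow> finite (T x)" unfolding T_def using finNb SO OV by auto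
  have A1: "(\<Sum>x\<in>S. AT x) = (\<Sum>(x, y)\<in>E. \<mu> x y * \<phi> x powr s * u x powr (p - t) * cpow (gradn \<mu> u x) q)"
  proof -
    have "(\<Sum>x\<in>S. AT x) = (\<Sum>(x, y)\<in>Sigma S T. Aterm x y)" unfolding AT_def
      using finS finT by (intro sum.Sigma) auto
    also have "\<dots> = (\<Sum>(x, y)\<in>E. Aterm x y)"
    proof (rule sum.mono_neutral_left[OF finE SigE])
      show "\<forall>i\<in>E - Sigma S T. (case i of (x, y) \<Rightarrow> Aterm x y) = 0"
      proof
        fix i assume i: "i \<in> E - Sigma S T"
        obtain x y where xy: "i = (x, y)" by (cases i)
        have "\<phi> x = 0" using i xy unfolding E_def S_def T_def Nb_def by auto
        then show "(case i of (x, y) \<Rightarrow> Aterm x y) = 0" using xy unfolding Aterm_def by simp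
      qed
    qed
    finally show ?thesis unfolding Aterm_def g_def .
  qed
  have B1: "(\<Sum>x\<in>S. BT x) \<le> (\<Sum>(x, y)\<in>E. \<mu> x y * \<bar>\<phi> y - \<phi> x\<bar> powr \<theta>)"
  proof -
    have "(\<Sum>x\<in>S. BT x) = (\<Sum>(x, y)\<in>Sigma S T. Bterm x y)" unfolding BT_def
      using finS finT by (intro sum.Sigma) auto
    also have "\<dots> \<le> (\<Sum>(x, y)\<in>E. Bterm x y)"
      using finE SigE mu0 unfolding Bterm_def by (intro sum_mono2) auto
    finally show ?thesis unfolding Bterm_def .
  qed
  have "(\<Sum>x\<in>S. K0*b*lam*AT x + K0*c*e3*BT x) = K0*b*lam*(\<Sum>x\<in>S. AT x) + K0*c*e3*(\<Sum>x\<in>S. BT x)"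
    by (simp add: sum.distrib sum_distrib_left)
  also have "\<dots> \<le> K0*b*lam*(\<Sum>(x, y)\<in>E. \<mu> x y * \<phi> x powr s * u x powr (p - t) * cpow (gradn \<mu> u x) q)
       + K0*c*e3*(\<Sum>(x, y)\<in>E. \<mu> x y * \<bar>\<phi> y - \<phi> x\<bar> powr \<theta>)"
    unfolding A1 using B1 K0pos pars e1pos unfolding e3_def by (intro add_left_mono mult_left_mono) auto
  finally have L4: "(\<Sum>x\<in>S. K0*b*lam*AT x + K0*c*e3*BT x) \<le> K0*b*lam*(\<Sum>(x, y)\<in>E. \<mu> x y * \<phi> x powr s * u x powr (p - t) * cpow (gradn \<mu> u x) q)
       + K0*c*e3*(\<Sum>(x, y)\<in>E. \<mu> x y * \<bar>\<phi> y - \<phi> x\<bar> powr \<theta>)" .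
  have "(\<Sum>x\<in>{x\<in>\<Omega>. \<phi> x \<noteq> 0}. wdeg \<mu> x * u x powr (p - t) * cpow (gradn \<mu> u x) q * \<phi> x powr s)
     \<le> K0*b*lam*(\<Sum>(x, y)\<in>E. \<mu> x y * \<phi> x powr s * u x powr (p - t) * cpow (gradn \<mu> u x) q)
       + K0*c*e3*(\<Sum>(x, y)\<in>E. \<mu> x y * \<bar>\<phi> y - \<phi> x\<bar> powr \<theta>)"
    using L1 L2 L3 L4 unfolding S_def by linarith
  then show ?thesis unfolding e3_def by (simp add: algebra_simps)
qed

lemma A_le_L:
  fixes V :: "nat set" and \<mu> :: "nat \<Rightarrow> nat \<Rightarrow> real" and \<Omega> :: "nat set" and u \<phi> :: "nat \<Rightarrow> real"
    and p q s t :: real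
  assumes wg: "weighted_graph V \<mu>" and OV: "\<Omega> \<subseteq> V"
    and phr: "\<forall>x. 0 \<le> \<phi> x \<and> \<phi> x \<le> 1" and phf: "finite {x. \<phi> x \<noteq> 0}" and s: "s > 0"
  defines "E \<equiv> {(x, y). x \<in> \<Omega> \<and> y \<in> \<Omega> \<and> adj \<mu> x y \<and> \<phi> y - \<phi> x \<noteq> 0}"
  shows "(\<Sum>(x, y)\<in>E. \<mu> x y * \<phi> x powr s * u x powr (p - t) * cpow (gradn \<mu> u x) q)
    \<le> (\<Sum>x\<in>{x\<in>\<Omega>. \<phi> x \<noteq> 0}. wdeg \<mu> x * u x powr (p - t) * cpow (gradn \<mu> u x) q * \<phi> x powr s)"
proof -
  define S where "S = {x\<in>\<Omega>. \<phi> x \<noteq> 0}"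
  have finS: "finite S" using phf unfolding S_def by (rule rev_finite_subset) auto
  define K where "K x = \<phi> x powr s * u x powr (p - t) * cpow (gradn \<mu> u x) q" for x
  have K0: "\<And>x. K x \<ge> 0" unfolding K_def using cpow_nonneg'[OF gradn_nonneg[OF wg]] by simp
  have mu0: "\<And>x y. \<mu> x y \<ge> 0" using wg unfolding weighted_graph_def by auto
  define T where "T x = {y. (x, y) \<in> E}" for x
  have TN: "\<And>x. T x \<subseteq> {y. adj \<mu> x y}" unfolding T_def E_def by auto
  have finT: "\<And>x. x \<in> S \<Longrightarrow> finite (T x)"
  proof -
    fix x assume "x \<in> S"
    then have "x \<in> V" using OV unfolding S_def by auto
    then show "finite (T x)" using TN[of x] wg_finite[OF wg] by (rule_tac rev_finite_subset) auto
  qed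
  have L0: "(\<Sum>x\<in>S. wdeg \<mu> x * K x) \<ge> 0" using K0 wdeg_nonneg[OF wg] by (simp add: sum_nonneg)
  have Leq: "(\<Sum>x\<in>S. wdeg \<mu> x * K x) = (\<Sum>x\<in>{x\<in>\<Omega>. \<phi> x \<noteq> 0}. wdeg \<mu> x * u x powr (p - t) * cpow (gradn \<mu> u x) q * \<phi> x powr s)"
    unfolding S_def K_def by (rule sum.cong) (auto simp: algebra_simps)
  show ?thesis
  proof (cases "finite E")
    case False
    then show ?thesis using L0 unfolding Leq by simp
  next
    case finE: True
    have "(\<Sum>(x, y)\<in>E. \<mu> x y * \<phi> x powr s * u x powr (p - t) * cpow (gradn \<mu> u x) q) = (\<Sum>(x, y)\<in>E. \<mu> x y * K x)"
      unfolding K_def by (rule sum.cong) (auto simp: mult.assoc)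
    also have "\<dots> = (\<Sum>(x, y)\<in>Sigma S T. \<mu> x y * K x)"
    proof (rule sum.mono_neutral_right[OF finE])
      show "Sigma S T \<subseteq> E" unfolding T_def by auto
      show "\<forall>i\<in>E - Sigma S T. (case i of (x, y) \<Rightarrow> \<mu> x y * K x) = 0"
      proof
        fix i assume i: "i \<in> E - Sigma S T"
        obtain x y where xy: "i = (x, y)" by (cases i)
        have "\<phi> x = 0" using i xy unfolding E_def S_def T_def by auto
        then show "(case i of (x, y) \<Rightarrow> \<mu> x y * K x) = 0" using xy s unfolding K_def by simp
      qed
    qed
    also have "\<dots> = (\<Sum>x\<in>S. \<Sum>y\<in>T x. \<mu> x y * K x)" using finS finT by (intro sum.Sigma[symmetric]) auto
    also have "\<dots> \<le> (\<Sum>x\<in>S. wdeg \<mu> x * K x)"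
    proof (rule sum_mono)
      fix x assume xS: "x \<in> S"
      have xV: "x \<in> V" using xS OV unfolding S_def by auto
      have "(\<Sum>y\<in>T x. \<mu> x y) \<le> (\<Sum>y\<in>{y. adj \<mu> x y}. \<mu> x y)"
        using TN wg_finite[OF wg xV] mu0 by (intro sum_mono2) auto
      then have "(\<Sum>y\<in>T x. \<mu> x y) * K x \<le> wdeg \<mu> x * K x" unfolding wdeg_def using K0 by (rule mult_right_mono)
      then show "(\<Sum>y\<in>T x. \<mu> x y * K x) \<le> wdeg \<mu> x * K x" by (simp add: sum_distrib_right)
    qed
    finally show ?thesis unfolding Leq .
  qed
qed

theorem mainTheorem14:
  fixes p0 p1 m p q s t :: real
  assumes "p0 > 1" and "m > 1" and "p + q \<noteq> m - 1" and "p1 > 1"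
    and "s > 0" and "t > 0"
    and "(m * p + q + t * (q - m)) / ((m - 1) * p + t * (q - m + 1)) > 1"
    and "(p + q - t) / (m - 1 - t) > 1"
    and "s > (m * p + q + t * (q - m)) / (p + q - m + 1)"
  shows "\<exists>C>0. \<exists>C'>0. \<forall>(V::nat set) \<mu> \<Omega> (u::nat \<Rightarrow> real).
     weighted_graph V \<mu> \<and> cond_p0 \<mu> p0 \<and>
     \<Omega> \<subseteq> V \<and> \<Omega> \<noteq> {} \<and>
     (\<forall>x\<in>V. u x > 0) \<and> (\<exists>x\<in>V. \<exists>y\<in>V. u x \<noteq> u y) \<and>
     (\<forall>x\<in>\<Omega>. (q < 0 \<longrightarrow> gradn \<mu> u x > 0) \<and>
        mlap m \<mu> u x + u x powr p * cpow (gradn \<mu> u x) q \<le> 0) \<and>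
     (\<forall>x y. adj \<mu> x y \<longrightarrow> 1 / p1 \<le> u x / u y \<and> u x / u y \<le> p1) \<and>
     (\<Omega> \<noteq> V \<longrightarrow> (\<forall>x\<in>\<Omega>. \<forall>y\<in>V - \<Omega>. adj \<mu> x y \<longrightarrow> u y \<ge> u x))
   \<longrightarrow> (\<forall>\<phi>::nat \<Rightarrow> real.
         (\<forall>x. 0 \<le> \<phi> x \<and> \<phi> x \<le> 1) \<and> finite {x. \<phi> x \<noteq> 0} \<and> {x. \<phi> x \<noteq> 0} \<subseteq> \<Omega>
       \<longrightarrow> (let \<theta> = (m * p + q + t * (q - m)) / (p + q - m + 1);
                L = (\<Sum>x\<in>{x\<in>\<Omega>. \<phi> x \<noteq> 0}.
                       wdeg \<mu> x * u x powr (p - t) * cpow (gradn \<mu> u x) q * \<phi> x powr s);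
                E = {(x, y). x \<in> \<Omega> \<and> y \<in> \<Omega> \<and> adj \<mu> x y \<and> \<phi> y - \<phi> x \<noteq> 0};
                A = (\<Sum>(x, y)\<in>E. \<mu> x y * \<phi> x powr s * u x powr (p - t) * cpow (gradn \<mu> u x) q);
                B = (\<Sum>(x, y)\<in>E. \<mu> x y * \<bar>\<phi> y - \<phi> x\<bar> powr \<theta>)
            in L \<le> C * A powr ((m - 1 - t) / (p + q - t)) * B powr ((p + q - m + 1) / (p + q - t))
             \<and> L \<le> C' * B))"
proof -
  define N0 where "N0 = m * p + q + t * (q - m)"
  define D1 where "D1 = (m - 1) * p + t * (q - m + 1)"
  define M0 where "M0 = m - 1 - t"
  define D2 where "D2 = p + q - m + 1"
  define P0 where "P0 = p + q - t"
  have N0e: "N0 = D1 + P0" unfolding N0_def D1_def P0_def by (simp add: algebra_simps)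
  have D2e: "D2 = P0 - M0" unfolding D2_def P0_def M0_def by simp
  have h7: "N0 / D1 > 1" using assms(7) unfolding N0_def D1_def .
  have h8: "P0 / M0 > 1" using assms(8) unfolding P0_def M0_def .
  have D1nz: "D1 \<noteq> 0" using h7 by auto
  have M0nz: "M0 \<noteq> 0" using h8 by auto
  have pd1: "P0 / D1 > 0"
  proof -
    have "N0 / D1 - 1 = P0 / D1" using D1nz unfolding N0e by (simp add: field_simps)
    then show ?thesis using h7 by simp
  qed
  have pm: "P0 / M0 > 0" using h8 by simp
  have dm: "D2 / M0 > 0"
  proof -
    have "P0 / M0 - 1 = D2 / M0" using M0nz unfolding D2e by (simp add: field_simps)
    then show ?thesis using h8 by simp
  qed
  have signs: "(D1 > 0 \<and> P0 > 0 \<and> M0 > 0 \<and> D2 > 0 \<and> N0 > 0) \<or> (D1 < 0 \<and> P0 < 0 \<and> M0 < 0 \<and> D2 < 0 \<and> N0 < 0)"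
    using pd1 pm dm N0e by (auto simp: zero_less_divide_iff)
  define a where "a = D1 / N0"
  define b where "b = M0 / N0"
  define c where "c = D2 / N0"
  define \<theta> where "\<theta> = N0 / D2"
  have N0nz: "N0 \<noteq> 0" and D2nz: "D2 \<noteq> 0" and P0nz: "P0 \<noteq> 0" using signs by auto
  have a0: "a > 0" and b0: "b > 0" and c0: "c > 0" unfolding a_def b_def c_def using signs
    by (auto simp: zero_less_divide_iff)
  have abc: "a + b + c = 1" unfolding a_def b_def c_def using N0nz N0e D2e
    by (simp add: add_divide_distrib[symmetric])
  have lin1: "m*a + q*b = m-1"
  proof -
    have i: "m*D1 + q*M0 = (m-1)*N0" unfolding N0_def D1_def M0_def by (simp add: algebra_simps)
    have "m*a + q*b = (m*D1 + q*M0)/N0" unfolding a_def b_def by (simp add: add_divide_distrib)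
    then show ?thesis unfolding i using N0nz by simp
  qed
  have lin2: "-(t+1)*a + (p-t)*b = -t"
  proof -
    have i: "-(t+1)*D1 + (p-t)*M0 = (-t)*N0" unfolding N0_def D1_def M0_def by (simp add: algebra_simps)
    have "-(t+1)*a + (p-t)*b = (-(t+1)*D1 + (p-t)*M0)/N0" unfolding a_def b_def by (simp add: add_divide_distrib)
    then show ?thesis unfolding i using N0nz by simp
  qed
  have thc: "\<theta>*c = 1" unfolding \<theta>_def c_def using N0nz D2nz by simp
  have sc: "s*(1-c) \<le> s-1"
  proof -
    have "s > \<theta>" using assms(9) unfolding \<theta>_def N0_def D2_def .
    then have "s*c > \<theta>*c" using c0 by simp
    then show ?thesis using thc by (simp add: algebra_simps)
  qed
  have alpha: "(m - 1 - t) / (p + q - t) = b/(b+c)"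
    unfolding b_def c_def M0_def[symmetric] P0_def[symmetric] using N0nz P0nz D2e
    by (simp add: add_divide_distrib[symmetric])
  have beta: "(p + q - m + 1) / (p + q - t) = c/(b+c)"
    unfolding b_def c_def D2_def[symmetric] P0_def[symmetric] using N0nz P0nz D2e
    by (simp add: add_divide_distrib[symmetric])
  define K0 where "K0 = sqrt (2*p0) powr (m-1) * real (nat \<lceil>s\<rceil>) * p1 powr t"
  define e1 where "e1 = (t * p1 powr (-t-1) / p0) / (2*K0*a)"
  have K0pos: "K0 > 0" unfolding K0_def using assms by simp
  have e1pos: "e1 > 0" unfolding e1_def using K0pos a0 assms by simp
  define P1 where "P1 = K0*b"
  define P2 where "P2 = K0*c*e1 powr (-a/c)"
  have P1pos: "P1 > 0" unfolding P1_def using K0pos b0 by simp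
  have P2pos: "P2 > 0" unfolding P2_def using K0pos c0 e1pos by simp
  define C where "C = P1 + P2"
  define C' where "C' = C powr (1 / (c/(b+c)))"
  have Cpos: "C > 0" unfolding C_def using P1pos P2pos by simp
  have C'pos: "C' > 0" unfolding C'_def using Cpos by simp
  have thE: "(m * p + q + t * (q - m)) / (p + q - m + 1) = \<theta>" unfolding \<theta>_def N0_def D2_def ..
  show ?thesis
    apply (rule exI[of _ C], rule conjI[OF Cpos], rule exI[of _ C'], rule conjI[OF C'pos])
    apply (intro allI impI)
    subgoal premises prems for V \<mu> \<Omega> u \<phi>
    proof -
    note H = prems(1)
    note HP = prems(2)
    define E where "E = {(x, y). x \<in> \<Omega> \<and> y \<in> \<Omega> \<and> adj \<mu> x y \<and> \<phi> y - \<phi> x \<noteq> 0}"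
    define L where "L = (\<Sum>x\<in>{x\<in>\<Omega>. \<phi> x \<noteq> 0}.
                       wdeg \<mu> x * u x powr (p - t) * cpow (gradn \<mu> u x) q * \<phi> x powr s)"
    define A where "A = (\<Sum>(x, y)\<in>E. \<mu> x y * \<phi> x powr s * u x powr (p - t) * cpow (gradn \<mu> u x) q)"
    define B where "B = (\<Sum>(x, y)\<in>E. \<mu> x y * \<bar>\<phi> y - \<phi> x\<bar> powr \<theta>)"
    have wg: "weighted_graph V \<mu>" using H by blast
    have core: "L \<le> P1*lam*A + P2*lam powr (-b/c)*B" if lam: "lam > 0" for lam
    proof -
      have "L \<le> (K0*b)*lam*A + (K0*c*e1 powr (-a/c))*lam powr (-b/c)*B"
        unfolding L_def A_def B_def E_def
        by (rule core_ineq[of V \<mu> p0 \<Omega> u q m p p1 \<phi> s t a b c \<theta> lam K0 e1])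
           (use H HP assms a0 b0 c0 abc lin1 lin2 thc sc lam K0_def e1_def in auto)
      then show ?thesis unfolding P1_def P2_def .
    qed
    have A0: "A \<ge> 0" unfolding A_def using wg cpow_nonneg'[OF gradn_nonneg[OF wg]]
      unfolding weighted_graph_def by (intro sum_nonneg) auto
    have B0: "B \<ge> 0" unfolding B_def using wg unfolding weighted_graph_def by (intro sum_nonneg) auto
    have L0: "L \<ge> 0" unfolding L_def using wdeg_nonneg[OF wg] cpow_nonneg'[OF gradn_nonneg[OF wg]]
      by (intro sum_nonneg) auto
    have AL: "A \<le> L" unfolding A_def L_def E_def
      by (rule A_le_L[OF wg]) (use H HP assms in auto)
    have first: "L \<le> C * A powr (b/(b+c)) * B powr (c/(b+c))"
      unfolding C_def by (rule opt_lambda[OF A0 B0 P1pos P2pos b0 c0 core])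
    have second: "L \<le> C' * B"
      unfolding C'_def
      by (rule second_ineq[OF L0 A0 AL B0 Cpos _ _ _ first]) (use b0 c0 in \<open>auto simp: field_simps\<close>)
    show ?thesis
      unfolding Let_def thE alpha beta using first second unfolding L_def A_def B_def E_def by blast
  qed
  done
qed

end
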